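(* For $n\ge1$ and even $h\ge0$, the number of unlabelled unicellular $n$-vertex maps in the orientable surface $\mathbf S_{h/2}$ is at most $2^{4n+3h}h^h$.
   Context: A map is a connected pseudograph (loops and multiple edges allowed) cellularly embedded in a surface, considered unlabelled and unrooted; it is unicellular if it has exactly one face. $\mathbf S_k$ is the orientable surface with $k$ handles (Euler genus $2k$). Convention $0^0=1$. *)

theory Defs
  imports "HOL-Combinatorics.Permutations"
begin

text \<open>Combinatorial maps on orientable surfaces, encoded as rotation systems.
A map with D darts (darts 0..<D) is a triple (D, s, a): s is the vertex rotation
(a permutation of the darts), a is the edge involution (fixed-point-free involution).
Vertices = orbits of s, edges = orbits of a, faces = orbits of s o a.
The map with one vertex and no edges is represented by D = 0, for which
we set the vertex and face counts to 1 by convention.\<close>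

type_synonym rmap = "nat \<times> (nat \<Rightarrow> nat) \<times> (nat \<Rightarrow> nat)"

definition darts :: "rmap \<Rightarrow> nat set" where
  "darts M = {..<fst M}"

definition vrot :: "rmap \<Rightarrow> nat \<Rightarrow> nat" where
  "vrot M = fst (snd M)"

definition einv :: "rmap \<Rightarrow> nat \<Rightarrow> nat" where
  "einv M = snd (snd M)"

definition is_rmap :: "rmap \<Rightarrow> bool" where
  "is_rmap M \<longleftrightarrow>
     vrot M permutes darts M \<and> einv M permutes darts M \<and>
     (\<forall>x\<in>darts M. einv M x \<noteq> x \<and> einv M (einv M x) = x) \<and>
     \<comment> \<open>connectedness: the group generated by s and a acts transitively\<close>
     (\<forall>x\<in>darts M. \<forall>y\<in>darts M.
        (x, y) \<in> ({(z, vrot M z) | z. z \<in> darts M} \<union> {(z, einv M z) | z. z \<in> darts M})\<^sup>*)"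

definition num_orbits :: "nat set \<Rightarrow> (nat \<Rightarrow> nat) \<Rightarrow> nat" where
  "num_orbits S f = card (S // {(x, y). x \<in> S \<and> y \<in> S \<and> (x, y) \<in> {(z, f z) | z. z \<in> S}\<^sup>*})"

definition num_vertices :: "rmap \<Rightarrow> nat" where
  "num_vertices M = (if fst M = 0 then 1 else num_orbits (darts M) (vrot M))"

definition num_edges :: "rmap \<Rightarrow> nat" where
  "num_edges M = fst M div 2"

definition num_faces :: "rmap \<Rightarrow> nat" where
  "num_faces M = (if fst M = 0 then 1 else num_orbits (darts M) (vrot M \<circ> einv M))"

definition euler_genus :: "rmap \<Rightarrow> int" where
  "euler_genus M = 2 - (int (num_vertices M) - int (num_edges M) + int (num_faces M))"

text \<open>Isomorphism of unlabelled unrooted maps: a relabelling of darts carrying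
one rotation system to the other, or to its mirror image (s^-1, a).\<close>
definition map_iso :: "rmap \<Rightarrow> rmap \<Rightarrow> bool" where
  "map_iso M M' \<longleftrightarrow> fst M = fst M' \<and>
     (\<exists>p. p permutes darts M \<and> (\<forall>x\<in>darts M. p (einv M x) = einv M' (p x)) \<and>
        ((\<forall>x\<in>darts M. p (vrot M x) = vrot M' (p x)) \<or>
         (\<forall>x\<in>darts M. vrot M' (p (vrot M x)) = p x)))"

definition unicellular_maps :: "nat \<Rightarrow> nat \<Rightarrow> rmap set" where
  "unicellular_maps n h = {M. is_rmap M \<and> num_vertices M = n \<and> num_faces M = 1 \<and>
                               euler_genus M = int h}"

definition num_unicellular_maps :: "nat \<Rightarrow> nat \<Rightarrow> nat" where
  "num_unicellular_maps n h =
     card (unicellular_maps n h //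
           {(M, M'). M \<in> unicellular_maps n h \<and> M' \<in> unicellular_maps n h \<and> map_iso M M'})"

end

theory Submission
  imports Defs "HOL-Combinatorics.Orbits"
begin

definition pos :: "'a list \<Rightarrow> 'a \<Rightarrow> nat" where
  "pos L z = (THE i. i < length L \<and> L ! i = z)"

lemma pos_nth: "distinct L \<Longrightarrow> i < length L \<Longrightarrow> pos L (L ! i) = i"
  unfolding pos_def by (rule the_equality) (auto simp: nth_eq_iff_index_eq)

lemma pos_in: "z \<in> set L \<Longrightarrow> distinct L \<Longrightarrow> pos L z < length L \<and> L ! pos L z = z"
  by (metis in_set_conv_nth pos_nth)

locale rm =
  fixes D :: nat and s a :: "nat \<Rightarrow> nat"
  assumes sp: "s permutes {..<D}" and ap: "a permutes {..<D}"
    and afp: "\<forall>x\<in>{..<D}. a x \<noteq> x \<and> a (a x) = x"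
    and conn: "\<forall>x\<in>{..<D}. \<forall>y\<in>{..<D}.
        (x, y) \<in> ({(z, s z) | z. z \<in> {..<D}} \<union> {(z, a z) | z. z \<in> {..<D}})\<^sup>*"
begin

lemma perm: "permutation s" using sp by (intro permutes_imp_permutation) auto

lemma s_in: "x < D \<Longrightarrow> s x < D" using permutes_in_image[OF sp, of x] by simp
lemma a_in: "x < D \<Longrightarrow> a x < D" using permutes_in_image[OF ap, of x] by simp

lemma self_orb: "x \<in> orbit s x" using perm by (rule permutation_self_in_orbit)

lemma orb_sub: "x < D \<Longrightarrow> orbit s x \<subseteq> {..<D}" using sp by (intro permutes_orbit_subset) auto

lemma orb_eq: "y \<in> orbit s x \<Longrightarrow> orbit s y = orbit s x"
  using cyclic_on_orbit'[OF perm, of x] orbit_cyclic_eq3 by metis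

lemma orb_step: "y \<in> orbit s x \<Longrightarrow> s y \<in> orbit s x" by (rule orbit.step)

lemma orb_pow: "(s ^^ j) x \<in> orbit s x"
  using funpow_in_orbit[OF self_orb] .

definition per :: "nat \<Rightarrow> nat" where "per w = funpow_dist1 s w w"

lemma per_pos: "per w > 0" unfolding per_def by simp

lemma per_id: "(s ^^ per w) w = w" unfolding per_def using funpow_dist1_prop[OF self_orb] .

lemma per_inj: "inj_on (\<lambda>j. (s ^^ j) w) {0..<per w}"
  unfolding per_def using inj_on_funpow_dist1[OF self_orb] .

definition vlist :: "nat \<Rightarrow> nat list" where
  "vlist w = map (\<lambda>j. (s ^^ Suc j) w) [0..<per w]"

lemma vlist_len: "length (vlist w) = per w" unfolding vlist_def by simp

lemma vlist_nth: "j < per w \<Longrightarrow> vlist w ! j = (s ^^ Suc j) w" unfolding vlist_def by simp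

lemma vlist_last: "vlist w ! (per w - 1) = w"
  using vlist_nth[of "per w - 1" w] per_pos[of w] per_id[of w] by simp

lemma vlist_step: "Suc j < per w \<Longrightarrow> s (vlist w ! j) = vlist w ! Suc j"
  using vlist_nth by simp

lemma vlist_first: "vlist w ! 0 = s w" using vlist_nth[of 0 w] per_pos[of w] by simp

lemma vlist_distinct: "distinct (vlist w)"
proof -
  have "inj_on (\<lambda>j. (s ^^ Suc j) w) {0..<per w}"
  proof (rule inj_onI)
    fix i j assume i: "i \<in> {0..<per w}" and j: "j \<in> {0..<per w}" and e: "(s ^^ Suc i) w = (s ^^ Suc j) w"
    have "s ((s ^^ i) w) = s ((s ^^ j) w)" using e by simp
    then have "(s ^^ i) w = (s ^^ j) w" using permutation_bijective[OF perm] by (meson bij_def injD)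
    then show "i = j" using per_inj i j by (meson inj_onD)
  qed
  then show ?thesis unfolding vlist_def by (simp add: distinct_map)
qed

lemma vlist_set: "set (vlist w) = orbit s w"
proof
  show "set (vlist w) \<subseteq> orbit s w" unfolding vlist_def using orb_pow[of "Suc _" w] by auto
  show "orbit s w \<subseteq> set (vlist w)"
  proof
    fix y assume "y \<in> orbit s w"
    then obtain j where j: "y = (s ^^ j) w" using orbit_altdef_permutation[OF perm] by auto
    have y2: "y = (s ^^ (j mod per w)) w" using j funpow_mod_eq[OF per_id] by simp
    have lt: "j mod per w < per w" using per_pos by simp
    show "y \<in> set (vlist w)"
    proof (cases "j mod per w = 0")
      case True
      then have "y = vlist w ! (per w - 1)" using y2 vlist_last by simp
      then show ?thesis using per_pos[of w] vlist_len[of w] by (metis diff_less nth_mem zero_less_one)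
    next
      case False
      then have "y = vlist w ! (j mod per w - 1)" using y2 vlist_nth[of "j mod per w - 1" w] lt by simp
      then show ?thesis using lt vlist_len[of w] by (metis less_imp_diff_less nth_mem)
    qed
  qed
qed

lemma orb_disj: "y \<in> orbit s x \<Longrightarrow> orbit s y \<inter> orbit s z \<noteq> {} \<Longrightarrow> orbit s x = orbit s z"
  by (metis disjoint_iff orb_eq)

end

context rm
begin

definition psi :: "nat set \<Rightarrow> nat \<Rightarrow> nat" where
  "psi T z = (if z \<in> T then s (a z) else s z)"

definition good :: "nat list \<Rightarrow> nat set \<Rightarrow> nat set \<Rightarrow> bool" where
  "good L T W \<longleftrightarrow> distinct L \<and> set L \<subseteq> {..<D} \<and> L \<noteq> [] \<and>
     T \<subseteq> set L \<and> (\<forall>z\<in>T. a z \<in> T) \<and>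
     (\<forall>i<length L. psi T (L ! i) = L ! (Suc i mod length L)) \<and>
     W \<subseteq> set L \<and> set L = \<Union>(orbit s ` W) \<and> inj_on (orbit s) W \<and> card T + 2 = 2 * card W \<and>
     (\<forall>y\<in>T. \<forall>z\<in>T. pos L y < pos L z \<and> pos L z < pos L (a y) \<longrightarrow>
         pos L y < pos L (a z) \<and> pos L (a z) < pos L (a y))"

lemma good_init:
  assumes "0 < D" shows "good (vlist 0) {} {0}"
proof -
  have d: "distinct (vlist 0)" by (rule vlist_distinct)
  have st: "set (vlist 0) = orbit s 0" by (rule vlist_set)
  have sub: "set (vlist 0) \<subseteq> {..<D}" using st orb_sub assms by simp
  have ne: "vlist 0 \<noteq> []" using vlist_len[of 0] per_pos[of 0] by auto
  have cyc: "\<forall>i<length (vlist 0). psi {} (vlist 0 ! i) = vlist 0 ! (Suc i mod length (vlist 0))"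
  proof (intro allI impI)
    fix i assume i: "i < length (vlist 0)"
    show "psi {} (vlist 0 ! i) = vlist 0 ! (Suc i mod length (vlist 0))"
    proof (cases "Suc i < per 0")
      case True then show ?thesis using vlist_step[OF True] vlist_len unfolding psi_def by simp
    next
      case False
      then have ii: "i = per 0 - 1" using i vlist_len by simp
      have "Suc i mod length (vlist 0) = 0" using ii vlist_len[of 0] per_pos[of 0] by simp
      then show ?thesis using ii vlist_last[of 0] vlist_first[of 0] unfolding psi_def by simp
    qed
  qed
  have w: "{0} \<subseteq> set (vlist 0)" using st self_orb by simp
  show ?thesis unfolding good_def using d sub ne cyc w st by simp
qed

lemma good_closed:
  assumes "good L T W" "z \<in> set L" shows "orbit s z \<subseteq> set L"
proof -
  have "set L = \<Union>(orbit s ` W)" using assms unfolding good_def by simp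
  then obtain w where "w \<in> W" "z \<in> orbit s w" using assms(2) by auto
  then have "orbit s z = orbit s w" using orb_eq by simp
  then show ?thesis using \<open>w \<in> W\<close> \<open>set L = _\<close> by auto
qed

lemma good_disj:
  assumes "good L T W" "w \<notin> set L" shows "orbit s w \<inter> set L = {}"
proof (rule ccontr)
  assume "orbit s w \<inter> set L \<noteq> {}"
  then obtain y where y: "y \<in> orbit s w" "y \<in> set L" by auto
  have "orbit s y = orbit s w" using orb_eq y(1) by simp
  then have "w \<in> set L" using good_closed[OF assms(1) y(2)] self_orb by auto
  then show False using assms(2) by simp
qed

lemma nth_ins:
  fixes L V :: "'b list"
  assumes i: "i < length L"
  defines "L' \<equiv> take (Suc i) L @ V @ drop (Suc i) L"
  shows "length L' = length L + length V"
    and "j < Suc i \<Longrightarrow> L' ! j = L ! j"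
    and "Suc i \<le> j \<Longrightarrow> j < Suc i + length V \<Longrightarrow> L' ! j = V ! (j - Suc i)"
    and "Suc i + length V \<le> j \<Longrightarrow> j < length L + length V \<Longrightarrow> L' ! j = L ! (j - length V)"
proof -
  have lt: "length (take (Suc i) L) = Suc i" using i by simp
  show "length L' = length L + length V" unfolding L'_def using i by simp
  show "j < Suc i \<Longrightarrow> L' ! j = L ! j" unfolding L'_def using lt by (simp add: nth_append)
  show "L' ! j = V ! (j - Suc i)" if "Suc i \<le> j" "j < Suc i + length V"
  proof -
    have "j - Suc i < length V" using that by simp
    then show ?thesis unfolding L'_def using lt that by (simp add: nth_append)
  qed
  assume j: "Suc i + length V \<le> j" "j < length L + length V"
  have n1: "\<not> j < length (take (Suc i) L)" using lt j by simp
  have n2: "\<not> j - Suc i < length V" using j by simp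
  have "L' ! j = (V @ drop (Suc i) L) ! (j - Suc i)"
    unfolding L'_def nth_append[of "take (Suc i) L"] using n1 lt by (simp only: if_False)
  also have "\<dots> = drop (Suc i) L ! (j - Suc i - length V)"
    unfolding nth_append using n2 by (simp only: if_False)
  also have "\<dots> = L ! (Suc i + (j - Suc i - length V))" using i j by (simp add: nth_drop)
  also have "Suc i + (j - Suc i - length V) = j - length V" using j by simp
  finally show "L' ! j = L ! (j - length V)" .
qed

end

context rm
begin

lemma good_step:
  assumes g: "good L T W" and i: "i < length L" and ax: "a (L ! i) \<notin> set L"
  shows "\<exists>L' T' W'. good L' T' W' \<and> length L < length L'"
proof -
  define x where "x = L ! i"
  define w where "w = a x"
  define V where "V = vlist w"
  define m where "m = per w"
  define n where "n = length L"
  define L' where "L' = take (Suc i) L @ V @ drop (Suc i) L"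
  define T' where "T' = insert x (insert w T)"
  define W' where "W' = insert w W"
  have dL: "distinct L" and sL: "set L \<subseteq> {..<D}" and TL: "T \<subseteq> set L" and Ta: "\<forall>z\<in>T. a z \<in> T"
    and cyc: "\<forall>j<length L. psi T (L ! j) = L ! (Suc j mod length L)"
    and WL: "W \<subseteq> set L" and LW: "set L = \<Union>(orbit s ` W)" and injW: "inj_on (orbit s) W"
    and cTW: "card T + 2 = 2 * card W"
    and nc: "\<forall>y\<in>T. \<forall>z\<in>T. pos L y < pos L z \<and> pos L z < pos L (a y) \<longrightarrow>
         pos L y < pos L (a z) \<and> pos L (a z) < pos L (a y)"
    using g unfolding good_def by auto
  have xL: "x \<in> set L" unfolding x_def using i by simp
  have xD: "x < D" using xL sL by auto
  have wD: "w < D" unfolding w_def using a_in xD by simp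
  have wL: "w \<notin> set L" unfolding w_def x_def using ax .
  have xT: "x \<notin> T" using Ta TL wL unfolding w_def by auto
  have wT: "w \<notin> T" using TL wL by auto
  have wW: "w \<notin> W" using WL wL by auto
  have xw: "x \<noteq> w" using xL wL by auto
  have aw: "a w = x" unfolding w_def using afp xD by simp
  have Vset: "set V = orbit s w" unfolding V_def by (rule vlist_set)
  have dV: "distinct V" unfolding V_def by (rule vlist_distinct)
  have VL: "set V \<inter> set L = {}" using good_disj[OF g wL] Vset by simp
  have lenV: "length V = m" unfolding V_def m_def by (rule vlist_len)
  have m0: "0 < m" unfolding m_def by (rule per_pos)
  have Vlast: "V ! (m - 1) = w" unfolding V_def m_def by (rule vlist_last)
  have Vfirst: "V ! 0 = s w" unfolding V_def by (rule vlist_first)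
  have Vstep: "Suc k < m \<Longrightarrow> s (V ! k) = V ! Suc k" for k unfolding V_def m_def by (rule vlist_step)
  have VnT: "V ! k \<notin> T'" if "k < m - 1" for k
  proof -
    have "V ! k \<in> set V" using that lenV by simp
    then have "V ! k \<notin> set L" using VL by auto
    moreover have "V ! k \<noteq> V ! (m - 1)"
      using nth_eq_iff_index_eq[OF dV, of k "m - 1"] that lenV m0 by simp
    then have "V ! k \<noteq> w" using Vlast by simp
    ultimately show ?thesis unfolding T'_def using xL TL by auto
  qed
  have iLn: "i < n" using i n_def by simp
  note N = nth_ins[OF i, where V = V, folded L'_def, unfolded lenV, folded n_def]
  have lenL': "length L' = n + m" using N(1) .
  have setL': "set L' = set L \<union> set V"
  proof -
    have "set L' = set (take (Suc i) L) \<union> set V \<union> set (drop (Suc i) L)" unfolding L'_def by auto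
    also have "set (take (Suc i) L) \<union> set (drop (Suc i) L) = set L"
      by (metis append_take_drop_id set_append)
    ultimately show ?thesis by auto
  qed
  have dL': "distinct L'"
  proof -
    have d1: "distinct (take (Suc i) L @ drop (Suc i) L)" using dL by simp
    have d2: "set (take (Suc i) L) \<inter> set (drop (Suc i) L) = {}" using d1 unfolding distinct_append by blast
    have "set (take (Suc i) L) \<inter> set V = {}" using VL set_take_subset[of "Suc i" L] by blast
    moreover have "set (drop (Suc i) L) \<inter> set V = {}" using VL set_drop_subset[of "Suc i" L] by blast
    ultimately show ?thesis unfolding L'_def using d2 dV dL by auto
  qed
  have sL': "set L' \<subseteq> {..<D}" using setL' sL Vset orb_sub[OF wD] by auto
  have neL': "L' \<noteq> []" using lenL' m0 by auto
  have TL': "T' \<subseteq> set L'" unfolding T'_def using setL' TL xL Vlast lenV m0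
    by (metis (no_types, lifting) Un_iff diff_less insert_subset le_supI1 nth_mem zero_less_one)
  have Ta': "\<forall>z\<in>T'. a z \<in> T'" unfolding T'_def using Ta aw w_def by auto
  have psiT: "psi T' u = psi T u" if "u \<noteq> x" "u \<noteq> w" for u
    unfolding psi_def T'_def using that by simp
  have psix: "psi T' x = s w" unfolding psi_def T'_def w_def by simp
  have psiw: "psi T' w = s x" unfolding psi_def T'_def using aw by simp
  have psiTx: "psi T x = s x" unfolding psi_def using xT by simp
  have Lneq: "L ! j \<noteq> x" if "j < n" "j \<noteq> i" for j
    unfolding x_def using dL that iLn n_def by (simp add: nth_eq_iff_index_eq)
  have Lnw: "L ! j \<noteq> w" if "j < n" for j using wL that n_def by auto
  have cyc': "\<forall>j<length L'. psi T' (L' ! j) = L' ! (Suc j mod length L')"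
  proof (intro allI impI)
    fix j assume j: "j < length L'"
    then have j': "j < n + m" using lenL' by simp
    consider (a) "j < i" | (b) "j = i" | (c) "Suc i \<le> j" "j < i + m" | (d) "j = i + m" | (e) "i + m < j"
      by linarith
    then show "psi T' (L' ! j) = L' ! (Suc j mod length L')"
    proof cases
      case a
      have "L' ! j = L ! j" using N(2) a by simp
      moreover have "L' ! Suc j = L ! Suc j" using N(2) a by simp
      moreover have "Suc j mod length L' = Suc j" using a iLn lenL' by simp
      moreover have "Suc j mod n = Suc j" using a iLn by simp
      moreover have "psi T (L ! j) = L ! (Suc j mod n)" using cyc a iLn n_def by simp
      ultimately show ?thesis using psiT[OF Lneq Lnw] a iLn by simp
    next
      case b
      have "L' ! i = x" using N(2) x_def by simp
      moreover have "L' ! Suc i = V ! 0" using N(3)[of "Suc i"] m0 by simp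
      moreover have "Suc i mod length L' = Suc i" using iLn lenL' m0 by simp
      ultimately show ?thesis using b psix Vfirst by simp
    next
      case c
      define k where "k = j - Suc i"
      have k: "Suc k < m" using c k_def by simp
      have e: "j - i = Suc k" using c k_def by simp
      have "L' ! j = V ! k" using N(3) c k_def by simp
      moreover have "L' ! Suc j = V ! Suc k" using N(3)[of "Suc j"] c e by simp
      moreover have "Suc j mod length L' = Suc j" using c lenL' iLn by simp
      moreover have "psi T' (V ! k) = s (V ! k)" using VnT[of k] k unfolding psi_def by simp
      ultimately show ?thesis using Vstep[OF k] by simp
    next
      case d
      have "L' ! j = w" using N(3)[of j] d m0 Vlast by simp
      moreover have "psi T x = L ! (Suc i mod n)" using cyc i unfolding x_def n_def by simp
      ultimately have l: "psi T' (L' ! j) = L ! (Suc i mod n)" using psiw psiTx by simp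
      show ?thesis
      proof (cases "Suc i < n")
        case True
        have "L' ! Suc j = L ! Suc i" using N(4)[of "Suc j"] d True by simp
        moreover have "Suc j mod length L' = Suc j" using d True lenL' by simp
        ultimately show ?thesis using l True by simp
      next
        case False
        then have "Suc i = n" using iLn by simp
        then have "Suc j = length L'" using d lenL' by simp
        then have "Suc j mod length L' = 0" "Suc i mod n = 0" using \<open>Suc i = n\<close> by simp_all
        moreover have "L' ! 0 = L ! 0" using N(2) by simp
        ultimately show ?thesis using l by simp
      qed
    next
      case e
      define p where "p = j - m"
      have p: "i < p" "p < n" using e j' p_def by auto
      have "L' ! j = L ! p" using N(4)[of j] e j' p_def by simp
      then have l: "psi T' (L' ! j) = L ! (Suc p mod n)"
        using psiT[OF Lneq Lnw] p cyc n_def by simp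
      show ?thesis
      proof (cases "Suc j < n + m")
        case True
        have sp: "Suc j - m = Suc p" using e p_def by simp
        have "L' ! Suc j = L ! Suc p" using N(4)[of "Suc j"] e True sp by simp
        moreover have "Suc j mod length L' = Suc j" using True lenL' by simp
        moreover have "Suc p mod n = Suc p" using True p_def e by simp
        ultimately show ?thesis using l by simp
      next
        case False
        then have "Suc j = n + m" using j' by simp
        then have "Suc j = length L'" "Suc p = n" using lenL' p_def e by simp_all
        then have "Suc j mod length L' = 0" "Suc p mod n = 0" by simp_all
        moreover have "L' ! 0 = L ! 0" using N(2) by simp
        ultimately show ?thesis using l by simp
      qed
    qed
  qed
  have WL': "W' \<subseteq> set L'" unfolding W'_def using WL setL' Vset self_orb by auto
  have LW': "set L' = \<Union>(orbit s ` W')" unfolding W'_def using setL' LW Vset by auto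
  have injW': "inj_on (orbit s) W'"
    unfolding W'_def
  proof (rule inj_on_insert[THEN iffD2], intro conjI)
    show "inj_on (orbit s) W" by (rule injW)
    show "orbit s w \<notin> orbit s ` (W - {w})"
    proof
      assume "orbit s w \<in> orbit s ` (W - {w})"
      then obtain w' where "w' \<in> W" "orbit s w = orbit s w'" by auto
      then have "w \<in> set L" using LW self_orb[of w] by auto
      then show False using wL by simp
    qed
  qed
  have finT: "finite T" using TL finite_subset by blast
  have finW: "finite W" using WL finite_subset by blast
  have cT': "card T' = card T + 2" unfolding T'_def using finT xT wT xw by simp
  have cW': "card W' = card W + 1" unfolding W'_def using finW wW by simp
  have cTW': "card T' + 2 = 2 * card W'" using cT' cW' cTW by simp
  define f where "f = (\<lambda>p. if p \<le> i then p else p + m)"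
  have fmono: "f p < f q \<longleftrightarrow> p < q" for p q unfolding f_def by auto
  have posL': "pos L' z = f (pos L z)" if "z \<in> set L" for z
  proof -
    have pz: "pos L z < n" "L ! pos L z = z" using pos_in[OF that dL] n_def by auto
    show ?thesis
    proof (cases "pos L z \<le> i")
      case True
      have "L' ! pos L z = z" using N(2)[of "pos L z"] True pz by simp
      then have "pos L' z = pos L z" using pos_nth[OF dL', of "pos L z"] pz lenL' by simp
      then show ?thesis unfolding f_def using True by simp
    next
      case False
      have "L' ! (pos L z + m) = z" using N(4)[of "pos L z + m"] False pz by simp
      then have "pos L' z = pos L z + m" using pos_nth[OF dL', of "pos L z + m"] pz lenL' by simp
      then show ?thesis unfolding f_def using False by simp
    qed
  qed
  have posx: "pos L' x = i"
    using posL'[OF xL] pos_nth[OF dL i] unfolding x_def f_def by simp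
  have posw: "pos L' w = i + m"
  proof -
    have "L' ! (i + m) = w" using N(3)[of "i + m"] m0 Vlast by simp
    then show ?thesis using pos_nth[OF dL', of "i + m"] lenL' iLn by simp
  qed
  have posT: "pos L u \<noteq> i" "pos L u < n" if "u \<in> T" for u
  proof -
    have uL: "u \<in> set L" using that TL by auto
    show "pos L u < n" using pos_in[OF uL dL] n_def by simp
    show "pos L u \<noteq> i" using pos_in[OF uL dL] that xT unfolding x_def by metis
  qed
  have nc': "\<forall>y\<in>T'. \<forall>z\<in>T'. pos L' y < pos L' z \<and> pos L' z < pos L' (a y) \<longrightarrow>
         pos L' y < pos L' (a z) \<and> pos L' (a z) < pos L' (a y)"
  proof (intro ballI impI)
    fix y z assume y: "y \<in> T'" and z: "z \<in> T'" and pr: "pos L' y < pos L' z \<and> pos L' z < pos L' (a y)"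
    have fT: "pos L' u = f (pos L u)" if "u \<in> T" for u using posL' that TL by auto
    have fTa: "pos L' (a u) = f (pos L (a u))" if "u \<in> T" for u using posL' that TL Ta by auto
    have zcases: "pos L' z \<le> i \<or> i + m \<le> pos L' z"
    proof (cases "z \<in> T")
      case True
      then show ?thesis using fT[OF True] unfolding f_def by (cases "pos L z \<le> i") auto
    next
      case False
      then have "z = x \<or> z = w" using z unfolding T'_def by auto
      then show ?thesis using posx posw by auto
    qed
    show "pos L' y < pos L' (a z) \<and> pos L' (a z) < pos L' (a y)"
    proof (cases "y \<in> T")
      case yT: True
      show ?thesis
      proof (cases "z \<in> T")
        case zT: True
        have "pos L y < pos L z \<and> pos L z < pos L (a y)" using pr fT[OF yT] fT[OF zT] fTa[OF yT] fmono by simp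
        then have "pos L y < pos L (a z) \<and> pos L (a z) < pos L (a y)" using nc yT zT by blast
        then show ?thesis using fT[OF yT] fTa[OF zT] fTa[OF yT] fmono by simp
      next
        case zT: False
        then have "z = x \<or> z = w" using z unfolding T'_def by auto
        then show ?thesis
        proof
          assume zx: "z = x"
          have az: "pos L' (a z) = i + m" using zx posw w_def by simp
          have "f (pos L y) < i" using pr zx posx fT[OF yT] by simp
          moreover have "i < f (pos L (a y))" using pr zx posx fTa[OF yT] by simp
          then have "i + m < f (pos L (a y))" unfolding f_def by (auto split: if_splits)
          ultimately show ?thesis using az fT[OF yT] fTa[OF yT] by simp
        next
          assume zw: "z = w"
          have az: "pos L' (a z) = i" using zw posx aw by simp
          have "f (pos L y) < i + m" using pr zw posw fT[OF yT] by simp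
          then have "f (pos L y) < i" using posT[OF yT] unfolding f_def by (auto split: if_splits)
          moreover have "i + m < f (pos L (a y))" using pr zw posw fTa[OF yT] by simp
          ultimately show ?thesis using az fT[OF yT] fTa[OF yT] by simp
        qed
      qed
    next
      case False
      then have "y = x \<or> y = w" using y unfolding T'_def by auto
      then show ?thesis
      proof
        assume yx: "y = x"
        have "pos L' y = i" "pos L' (a y) = i + m" using yx posx posw w_def by auto
        then show ?thesis using pr zcases by simp
      next
        assume yw: "y = w"
        have "pos L' y = i + m" "pos L' (a y) = i" using yw posx posw aw by auto
        then show ?thesis using pr by simp
      qed
    qed
  qed
  have "good L' T' W'" unfolding good_def
    using dL' sL' neL' TL' Ta' cyc' WL' LW' injW' cTW' nc' by blast
  moreover have "length L < length L'" using lenL' m0 n_def by simp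
  ultimately show ?thesis by blast
qed

end

definition NC :: "nat set \<Rightarrow> (nat \<Rightarrow> nat) \<Rightarrow> bool" where
  "NC Q f \<longleftrightarrow> (\<forall>i\<in>Q. \<forall>j\<in>Q. i < j \<and> j < f i \<longrightarrow> i < f j \<and> f j < f i)"

definition invol_on :: "nat set \<Rightarrow> (nat \<Rightarrow> nat) \<Rightarrow> bool" where
  "invol_on S f \<longleftrightarrow> (\<forall>i\<in>S. f i \<in> S \<and> f i \<noteq> i \<and> f (f i) = i)"

lemma NC_unique:
  assumes ia: "invol_on Q a" and ib: "invol_on Q b" and na: "NC Q a" and nb: "NC Q b"
    and op: "\<forall>i\<in>Q. (i < a i) = (i < b i)"
  shows "\<forall>i\<in>Q. a i = b i"
proof -
  have main: "\<forall>i\<in>Q. i < a i \<and> a i - i < d \<longrightarrow> b i = a i" for d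
  proof (induction d rule: less_induct)
    case (less d)
    show ?case
    proof (intro ballI impI)
      fix i assume iQ: "i \<in> Q" and h: "i < a i \<and> a i - i < d"
      define k where "k = a i"
      have kQ: "k \<in> Q" and aki: "a k = i" using ia iQ unfolding invol_on_def k_def by auto
      have ik: "i < k" using h k_def by simp
      have inner: "b c = a c \<and> i < b c \<and> b c < k" if cQ: "c \<in> Q" and c1: "i < c" and c2: "c < k" for c
      proof -
        have ac: "i < a c \<and> a c < k" using na iQ cQ c1 c2 unfolding NC_def k_def by blast
        show ?thesis
        proof (cases "c < a c")
          case True
          have "Suc (a c - c) < d" using h ac c1 k_def by linarith
          then have "b c = a c" using less.IH[of "Suc (a c - c)"] cQ True by auto
          then show ?thesis using ac by simp
        next
          case False
          have acQ: "a c \<in> Q" and aac: "a (a c) = c" and acn: "a c \<noteq> c"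
            using ia cQ unfolding invol_on_def by auto
          have lt: "a c < a (a c)" using False acn aac by simp
          have "Suc (a (a c) - a c) < d" using h ac c2 aac k_def by linarith
          then have "b (a c) = a (a c)" using less.IH[of "Suc (a (a c) - a c)"] acQ lt by auto
          then have "b (a c) = c" using aac by simp
          then have "b c = a c" using ib acQ unfolding invol_on_def by metis
          then show ?thesis using ac by simp
        qed
      qed
      have bi: "i < b i" using op iQ ik k_def by auto
      have biQ: "b i \<in> Q" and bbi: "b (b i) = i" using ib iQ unfolding invol_on_def by auto
      show "b i = a i"
      proof (rule ccontr)
        assume ne: "b i \<noteq> a i"
        have "\<not> b i < k"
        proof
          assume "b i < k"
          then have "i < b (b i)" using inner[OF biQ bi] by simp
          then show False using bbi by simp
        qed
        then have lk: "k < b i" using ne k_def by simp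
        have bkQ: "b k \<in> Q" and bbk: "b (b k) = k" and bkn: "b k \<noteq> k"
          using ib kQ unfolding invol_on_def by auto
        have "\<not> k < b k" using op kQ aki ik by auto
        then have bkk: "b k < k" using bkn by simp
        have "\<not> (i < b k)"
        proof
          assume "i < b k"
          then have "i < b (b k) \<and> b (b k) < k" using inner[OF bkQ _ bkk] by simp
          then show False using bbk by simp
        qed
        moreover have "b k \<noteq> i" using bbk ne k_def by auto
        ultimately have "b k < i" by simp
        then have "b k < b i \<and> b i < b (b k)"
          using nb bkQ iQ bbk ik unfolding NC_def by (metis)
        then show False using bbk lk by simp
      qed
    qed
  qed
  show ?thesis
  proof
    fix i assume iQ: "i \<in> Q"
    show "a i = b i"
    proof (cases "i < a i")
      case True then show ?thesis using main[of "Suc (a i - i)"] iQ by auto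
    next
      case False
      have aiQ: "a i \<in> Q" and aai: "a (a i) = i" and ain: "a i \<noteq> i" using ia iQ unfolding invol_on_def by auto
      have "a i < a (a i)" using False ain aai by simp
      then have "b (a i) = a (a i)" using main[of "Suc (a (a i) - a i)"] aiQ by auto
      then have "b (a i) = i" using aai by simp
      then show ?thesis using ib aiQ aai unfolding invol_on_def by metis
    qed
  qed
qed

definition Inv :: "nat set \<Rightarrow> (nat \<Rightarrow> nat) set" where
  "Inv S = {g. invol_on S g \<and> (\<forall>i. i \<notin> S \<longrightarrow> g i = i)}"

lemma Inv_bound:
  "finite S \<Longrightarrow> finite (Inv S) \<and> card (Inv S) \<le> card S ^ (card S div 2)"
proof (induction "card S" arbitrary: S rule: less_induct)
  case less
  show ?case
  proof (cases "S = {}")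
    case True
    have "Inv S = {id}" unfolding Inv_def invol_on_def True by auto
    then show ?thesis using True by simp
  next
    case False
    then obtain x where xS: "x \<in> S" by auto
    define c where "c = card S"
    have c1: "c \<ge> 1" using xS less.prems c_def by (metis One_nat_def Suc_leI card_gt_0_iff empty_iff)
    define F where "F = (\<lambda>(y, g'). (g' :: nat \<Rightarrow> nat)(x := y, y := x))"
    define SG where "SG = (SIGMA y:S-{x}. Inv (S - {x, y}))"
    have sub: "Inv S \<subseteq> F ` SG"
    proof
      fix g assume g: "g \<in> Inv S"
      define y where "y = g x"
      have yS: "y \<in> S - {x}" and gy: "g y = x" using g xS unfolding Inv_def invol_on_def y_def by auto
      define g' where "g' = (\<lambda>i. if i = x \<or> i = y then i else g i)"
      have "g' \<in> Inv (S - {x, y})"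
        unfolding Inv_def invol_on_def g'_def
      proof (intro CollectI conjI ballI allI impI)
        fix i assume i: "i \<in> S - {x, y}"
        have gi: "g i \<in> S" "g i \<noteq> i" "g (g i) = i" using g i unfolding Inv_def invol_on_def by auto
        have "g i \<noteq> x" using gi(3) i y_def by auto
        moreover have "g i \<noteq> y" using gi(3) i gy by auto
        ultimately show "(if i = x \<or> i = y then i else g i) \<in> S - {x, y}"
          "(if i = x \<or> i = y then i else g i) \<noteq> i"
          "(if (if i = x \<or> i = y then i else g i) = x \<or> (if i = x \<or> i = y then i else g i) = y
             then (if i = x \<or> i = y then i else g i) else g (if i = x \<or> i = y then i else g i)) = i"
          using gi i by simp_all
      next
        fix i assume "i \<notin> S - {x, y}"
        then show "(if i = x \<or> i = y then i else g i) = i" using g unfolding Inv_def by auto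
      qed
      moreover have "g = F (y, g')" unfolding F_def g'_def using gy y_def by (simp add: fun_eq_iff)
      ultimately show "g \<in> F ` SG" unfolding SG_def using yS by blast
    qed
    have IHy: "finite (Inv (S - {x, y})) \<and> card (Inv (S - {x, y})) \<le> (c - 2) ^ ((c - 2) div 2)"
      if y: "y \<in> S - {x}" for y
    proof -
      have "card (S - {x, y}) = card S - card {x, y}"
        using y xS less.prems by (intro card_Diff_subset) auto
      then have cc: "card (S - {x, y}) = c - 2" using y c_def by simp
      have "card (S - {x, y}) < card S" using cc c1 c_def by linarith
      then show ?thesis using less.hyps[of "S - {x, y}"] less.prems cc by simp
    qed
    have finSG: "finite SG" unfolding SG_def using less.prems IHy by (intro finite_SigmaI) auto
    have "card (Inv S) \<le> card (F ` SG)" using sub finSG by (simp add: card_mono)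
    also have "\<dots> \<le> card SG" using finSG card_image_le by blast
    also have "\<dots> = (\<Sum>y\<in>S-{x}. card (Inv (S - {x, y})))"
      unfolding SG_def using less.prems IHy by (simp add: card_SigmaI)
    also have "\<dots> \<le> (\<Sum>y\<in>S-{x}. (c - 2) ^ ((c - 2) div 2))" using IHy by (intro sum_mono) auto
    also have "\<dots> = (c - 1) * (c - 2) ^ ((c - 2) div 2)" using xS less.prems c_def by simp
    also have "\<dots> \<le> c ^ (c div 2)"
    proof (cases "c \<ge> 2")
      case True
      have e: "c div 2 = Suc ((c - 2) div 2)" using True by (simp add: div_if)
      have "(c - 1) * (c - 2) ^ ((c - 2) div 2) \<le> c * c ^ ((c - 2) div 2)"
        by (intro mult_mono power_mono) auto
      then show ?thesis using e by simp
    next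
      case False then have "c = 1" using c1 by simp
      then show ?thesis by simp
    qed
    finally show ?thesis using finite_surj[OF finSG sub] c_def by simp
  qed
qed

definition codes :: "nat \<Rightarrow> nat \<Rightarrow> ((nat \<Rightarrow> nat) \<times> nat set) set" where
  "codes D k = {(\<alpha>, P). P \<subseteq> {..<D} \<and> card P = k \<and> invol_on {..<D} \<alpha> \<and> (\<forall>i. D \<le> i \<longrightarrow> \<alpha> i = i) \<and>
      (\<forall>i\<in>P. \<alpha> i \<in> P) \<and> NC ({..<D} - P) \<alpha>}"

lemma codes_bound:
  "finite (codes D k) \<and> card (codes D k) \<le> 2 ^ D * 2 ^ (D - k) * k ^ (k div 2)"
proof -
  define Ps where "Ps = {P. P \<subseteq> {..<D} \<and> card P = k}"
  define Tg where "Tg = (SIGMA P:Ps. Pow ({..<D} - P) \<times> Inv P)"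
  define \<phi> where "\<phi> = (\<lambda>(\<alpha> :: nat \<Rightarrow> nat, P :: nat set).
      (P, ({i\<in>{..<D} - P. i < \<alpha> i}, (\<lambda>i. if i \<in> P then \<alpha> i else i))))"
  have finPs: "finite Ps" unfolding Ps_def by (rule finite_subset[of _ "Pow {..<D}"]) auto
  have finP: "finite P" if "P \<in> Ps" for P using that unfolding Ps_def by (auto intro: finite_subset)
  have finInv: "finite (Inv P)" if "P \<in> Ps" for P using Inv_bound[OF finP[OF that]] by simp
  have finTg: "finite Tg" unfolding Tg_def using finPs finInv by (intro finite_SigmaI) auto
  have img: "\<phi> ` codes D k \<subseteq> Tg"
  proof
    fix t assume "t \<in> \<phi> ` codes D k"
    then obtain \<alpha> P where c: "(\<alpha>, P) \<in> codes D k" and t: "t = \<phi> (\<alpha>, P)" by auto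
    have "(\<lambda>i. if i \<in> P then \<alpha> i else i) \<in> Inv P"
      using c unfolding codes_def Inv_def invol_on_def by auto
    then show "t \<in> Tg" using c unfolding t \<phi>_def Tg_def Ps_def codes_def by auto
  qed
  have inj: "inj_on \<phi> (codes D k)"
  proof (rule inj_onI)
    fix x y assume x: "x \<in> codes D k" and y: "y \<in> codes D k" and e: "\<phi> x = \<phi> y"
    obtain \<alpha> P where xx: "x = (\<alpha>, P)" by (cases x)
    obtain \<beta> P' where yy: "y = (\<beta>, P')" by (cases y)
    have e1: "fst (\<phi> x) = fst (\<phi> y)" and e2: "fst (snd (\<phi> x)) = fst (snd (\<phi> y))"
      and e3: "snd (snd (\<phi> x)) = snd (snd (\<phi> y))" by (simp_all only: e)
    have PP: "P' = P" using e1 unfolding xx yy \<phi>_def by simp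
    have cx: "(\<alpha>, P) \<in> codes D k" and cy: "(\<beta>, P) \<in> codes D k" using x y xx yy PP by auto
    have fe: "(\<lambda>i. if i \<in> P then \<alpha> i else i) = (\<lambda>i. if i \<in> P then \<beta> i else i)"
      using e3 unfolding xx yy PP \<phi>_def by (simp only: prod.case snd_conv)
    have onP: "\<alpha> i = \<beta> i" if "i \<in> P" for i
      using fun_cong[OF fe, of i] that by simp
    have opn: "{i\<in>{..<D} - P. i < \<alpha> i} = {i\<in>{..<D} - P. i < \<beta> i}"
      using e2 unfolding xx yy PP \<phi>_def by (simp only: prod.case snd_conv fst_conv)
    define Q where "Q = {..<D} - P"
    have iQ: "invol_on Q \<gamma>" if "(\<gamma>, P) \<in> codes D k" for \<gamma>
      unfolding invol_on_def Q_def
    proof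
      fix i assume i: "i \<in> {..<D} - P"
      have "\<gamma> i \<in> {..<D}" "\<gamma> i \<noteq> i" "\<gamma> (\<gamma> i) = i" using that i unfolding codes_def invol_on_def by auto
      moreover have "\<gamma> i \<notin> P"
      proof
        assume "\<gamma> i \<in> P"
        moreover have "\<forall>j\<in>P. \<gamma> j \<in> P" using that unfolding codes_def by simp
        ultimately have "\<gamma> (\<gamma> i) \<in> P" by blast
        then show False using i \<open>\<gamma> (\<gamma> i) = i\<close> by simp
      qed
      ultimately show "\<gamma> i \<in> {..<D} - P \<and> \<gamma> i \<noteq> i \<and> \<gamma> (\<gamma> i) = i" by simp
    qed
    have onQ: "\<forall>i\<in>Q. \<alpha> i = \<beta> i"
    proof (rule NC_unique[OF iQ[OF cx] iQ[OF cy]])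
      show "NC Q \<alpha>" "NC Q \<beta>" using cx cy unfolding Q_def codes_def by auto
      show "\<forall>i\<in>Q. (i < \<alpha> i) = (i < \<beta> i)" using opn unfolding Q_def by blast
    qed
    have "\<alpha> i = \<beta> i" for i
    proof (cases "i < D")
      case True then show ?thesis using onP onQ unfolding Q_def by (cases "i \<in> P") auto
    next
      case False then show ?thesis using cx cy unfolding codes_def by auto
    qed
    then show "x = y" unfolding xx yy PP by auto
  qed
  have fin: "finite (codes D k)" using inj img finTg by (meson finite_imageD finite_subset)
  have "card (codes D k) = card (\<phi> ` codes D k)" using inj by (simp add: card_image)
  also have "\<dots> \<le> card Tg" using img finTg by (simp add: card_mono)
  also have "\<dots> = (\<Sum>P\<in>Ps. card (Pow ({..<D} - P) \<times> Inv P))"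
    unfolding Tg_def
  proof (rule card_SigmaI[OF finPs])
    show "\<forall>P\<in>Ps. finite (Pow ({..<D} - P) \<times> Inv P)" using finInv by simp
  qed
  also have "\<dots> \<le> (\<Sum>P\<in>Ps. 2 ^ (D - k) * k ^ (k div 2))"
  proof (rule sum_mono)
    fix P assume P: "P \<in> Ps"
    have "card (Pow ({..<D} - P)) = 2 ^ (D - k)"
    proof -
      have fP: "finite P" using finP[OF P] .
      have sP: "P \<subseteq> {..<D}" and cP: "card P = k" using P unfolding Ps_def by auto
      have "card ({..<D} - P) = D - k" using card_Diff_subset[OF fP sP] cP by simp
      then show ?thesis using card_Pow[of "{..<D} - P"] by simp
    qed
    moreover have "card (Inv P) \<le> k ^ (k div 2)" using Inv_bound[OF finP[OF P]] P unfolding Ps_def by simp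
    ultimately show "card (Pow ({..<D} - P) \<times> Inv P) \<le> 2 ^ (D - k) * k ^ (k div 2)"
      by (simp add: card_cartesian_product)
  qed
  also have "\<dots> = card Ps * (2 ^ (D - k) * k ^ (k div 2))" by simp
  also have "\<dots> \<le> 2 ^ D * (2 ^ (D - k) * k ^ (k div 2))"
  proof (rule mult_right_mono)
    have "card Ps = D choose k" unfolding Ps_def using n_subsets[of "{..<D}" k] by simp
    then show "card Ps \<le> 2 ^ D" using binomial_le_pow2 by simp
  qed simp
  finally show ?thesis using fin by (simp add: mult.assoc)
qed

definition canon :: "nat \<Rightarrow> (nat \<Rightarrow> nat) \<Rightarrow> nat set \<Rightarrow> rmap" where
  "canon D \<alpha> P = (D, (\<lambda>i. if i < D then (if i \<in> P then Suc i else Suc (\<alpha> i)) mod D else i), \<alpha>)"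

context rm
begin

lemma good_conn:
  assumes g: "good L T W" and cl: "\<forall>x\<in>set L. a x \<in> set L"
  shows "set L = {..<D}"
proof
  show "set L \<subseteq> {..<D}" using g unfolding good_def by blast
  show "{..<D} \<subseteq> set L"
  proof
    fix y assume y: "y \<in> {..<D}"
    have ne: "L \<noteq> []" using g unfolding good_def by simp
    define x0 where "x0 = L ! 0"
    have x0L: "x0 \<in> set L" unfolding x0_def using ne by simp
    then have x0D: "x0 \<in> {..<D}" using g unfolding good_def by auto
    have "(x0, y) \<in> ({(z, s z) | z. z \<in> {..<D}} \<union> {(z, a z) | z. z \<in> {..<D}})\<^sup>*"
      using conn x0D y by blast
    then show "y \<in> set L"
    proof (induction rule: rtrancl_induct)
      case base then show ?case using x0L .
    next
      case (step u v)
      from step.hyps(2) have "v = s u \<or> v = a u" by blast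
      then show ?case
      proof
        assume "v = s u"
        then show ?thesis using good_closed[OF g step.IH] orbit.base[of s u] by auto
      next
        assume "v = a u"
        then show ?thesis using cl step.IH by simp
      qed
    qed
  qed
qed

lemma good_len: "good L T W \<Longrightarrow> length L \<le> D"
  unfolding good_def by (metis card_lessThan card_mono distinct_card finite_lessThan)

lemma good_reach:
  assumes "good L T W" shows "\<exists>L' T' W'. good L' T' W' \<and> set L' = {..<D}"
  using assms
proof (induction "D - length L" arbitrary: L T W rule: less_induct)
  case less
  show ?case
  proof (cases "\<forall>x\<in>set L. a x \<in> set L")
    case True
    then show ?thesis using good_conn[OF less.prems] less.prems by blast
  next
    case False
    then obtain x where x: "x \<in> set L" "a x \<notin> set L" by blast
    have dL: "distinct L" using less.prems unfolding good_def by simp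
    define i where "i = pos L x"
    have i: "i < length L" "L ! i = x" using pos_in[OF x(1) dL] i_def by auto
    obtain L' T' W' where g': "good L' T' W'" and lt: "length L < length L'"
      using good_step[OF less.prems i(1)] i(2) x(2) by blast
    have "D - length L' < D - length L" using lt good_len[OF g'] by simp
    then show ?thesis using less.hyps g' by blast
  qed
qed

lemma reach_orbit:
  assumes x: "x < D" shows "(x, y) \<in> {(z, s z) | z. z \<in> {..<D}}\<^sup>* \<longleftrightarrow> y \<in> orbit s x"
proof
  assume "(x, y) \<in> {(z, s z) | z. z \<in> {..<D}}\<^sup>*"
  then show "y \<in> orbit s x"
  proof (induction rule: rtrancl_induct)
    case base then show ?case by (rule self_orb)
  next
    case (step u v)
    from step.hyps(2) have "v = s u" by blast
    then show ?case using orbit.step[OF step.IH] by simp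
  qed
next
  assume "y \<in> orbit s x"
  then obtain k where k: "y = (s ^^ k) x" using orbit_altdef_permutation[OF perm] by auto
  have "(x, (s ^^ k) x) \<in> {(z, s z) | z. z \<in> {..<D}}\<^sup>*" for k
  proof (induction k)
    case 0 then show ?case by simp
  next
    case (Suc k)
    have "(s ^^ k) x \<in> {..<D}" using orb_sub[OF x] orb_pow[of k x] by auto
    then have "((s ^^ k) x, s ((s ^^ k) x)) \<in> {(z, s z) | z. z \<in> {..<D}}" by blast
    then have "((s ^^ k) x, (s ^^ Suc k) x) \<in> {(z, s z) | z. z \<in> {..<D}}" by simp
    then show ?case by (rule rtrancl_into_rtrancl[OF Suc.IH])
  qed
  then show "(x, y) \<in> {(z, s z) | z. z \<in> {..<D}}\<^sup>*" using k by simp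
qed

lemma num_orbits_eq: "num_orbits {..<D} s = card (orbit s ` {..<D})"
proof -
  define R where "R = {(x, y). x \<in> {..<D} \<and> y \<in> {..<D} \<and> (x, y) \<in> {(z, s z) | z. z \<in> {..<D}}\<^sup>*}"
  have "R `` {x} = orbit s x" if x: "x \<in> {..<D}" for x
  proof -
    have "R `` {x} = {y. y \<in> {..<D} \<and> (x, y) \<in> {(z, s z) | z. z \<in> {..<D}}\<^sup>*}"
      unfolding R_def using x by auto
    also have "\<dots> = {y. y \<in> {..<D} \<and> y \<in> orbit s x}" using reach_orbit x by auto
    also have "\<dots> = orbit s x" using orb_sub x by auto
    finally show ?thesis .
  qed
  then have "{..<D} // R = orbit s ` {..<D}" unfolding quotient_def by auto
  then show ?thesis unfolding num_orbits_def R_def by simp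
qed

lemma good_final:
  assumes g: "good L T W" and full: "set L = {..<D}"
  defines "\<alpha> \<equiv> (\<lambda>i. if i < D then pos L (a (L ! i)) else i)"
    and "P \<equiv> {i. i < D \<and> L ! i \<notin> T}"
  shows "(\<alpha>, P) \<in> codes D (D - card T)"
    and "map_iso (D, s, a) (canon D \<alpha> P)"
    and "num_orbits {..<D} s = card W"
proof -
  have dL: "distinct L" and TL: "T \<subseteq> set L" and Ta: "\<forall>z\<in>T. a z \<in> T"
    and cyc: "\<forall>i<length L. psi T (L ! i) = L ! (Suc i mod length L)"
    and WL: "W \<subseteq> set L" and LW: "set L = \<Union>(orbit s ` W)" and injW: "inj_on (orbit s) W"
    and nc: "\<forall>y\<in>T. \<forall>z\<in>T. pos L y < pos L z \<and> pos L z < pos L (a y) \<longrightarrow>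
         pos L y < pos L (a z) \<and> pos L (a z) < pos L (a y)"
    using g unfolding good_def by auto
  have len: "length L = D" using distinct_card[OF dL] full by simp
  have posD: "pos L z < D" "L ! pos L z = z" if "z < D" for z
    using pos_in[of z L] dL full that len by auto
  have LD: "L ! i < D" if "i < D" for i using full len that by (metis lessThan_iff nth_mem)
  have pn: "pos L (L ! i) = i" if "i < D" for i using pos_nth[OF dL] len that by simp
  have aT: "a z \<notin> T" if "z < D" "z \<notin> T" for z using Ta afp that by (metis lessThan_iff)
  have \<alpha>i: "\<alpha> i = pos L (a (L ! i))" if "i < D" for i unfolding \<alpha>_def using that by simp
  have inv: "invol_on {..<D} \<alpha>"
    unfolding invol_on_def
  proof (intro ballI conjI)
    fix i assume i: "i \<in> {..<D}"
    have aL: "a (L ! i) < D" using a_in LD i by simp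
    show "\<alpha> i \<in> {..<D}" using \<alpha>i i posD aL by simp
    show "\<alpha> i \<noteq> i"
    proof
      assume "\<alpha> i = i"
      then have "a (L ! i) = L ! i" using \<alpha>i i posD(2)[OF aL] by simp
      then show False using afp LD i by simp
    qed
    have "\<alpha> (\<alpha> i) = pos L (a (L ! (\<alpha> i)))" using \<alpha>i posD aL i by simp
    also have "L ! (\<alpha> i) = a (L ! i)" using \<alpha>i i posD(2)[OF aL] by simp
    also have "a (a (L ! i)) = L ! i" using afp LD i by simp
    finally show "\<alpha> (\<alpha> i) = i" using pn i by simp
  qed
  have out: "\<forall>i. D \<le> i \<longrightarrow> \<alpha> i = i" unfolding \<alpha>_def by simp
  have Pcl: "\<forall>i\<in>P. \<alpha> i \<in> P"
  proof
    fix i assume "i \<in> P"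
    then have i: "i < D" "L ! i \<notin> T" unfolding P_def by auto
    have aL: "a (L ! i) < D" using a_in LD i by simp
    have "L ! (\<alpha> i) = a (L ! i)" using \<alpha>i i posD(2)[OF aL] by simp
    moreover have "a (L ! i) \<notin> T" using aT LD i by simp
    moreover have "\<alpha> i < D" using \<alpha>i i posD aL by simp
    ultimately show "\<alpha> i \<in> P" unfolding P_def by simp
  qed
  have NCQ: "NC ({..<D} - P) \<alpha>"
    unfolding NC_def
  proof (intro ballI impI)
    fix i j assume i: "i \<in> {..<D} - P" and j: "j \<in> {..<D} - P" and ij: "i < j \<and> j < \<alpha> i"
    have iT: "L ! i \<in> T" "i < D" using i unfolding P_def by auto
    have jT: "L ! j \<in> T" "j < D" using j unfolding P_def by auto
    have "pos L (L ! i) < pos L (L ! j) \<and> pos L (L ! j) < pos L (a (L ! i))"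
      using ij pn iT jT \<alpha>i by simp
    then have "pos L (L ! i) < pos L (a (L ! j)) \<and> pos L (a (L ! j)) < pos L (a (L ! i))"
      using nc iT jT by blast
    then show "i < \<alpha> j \<and> \<alpha> j < \<alpha> i" using pn iT jT \<alpha>i by simp
  qed
  have PD: "P \<subseteq> {..<D}" unfolding P_def by auto
  have cardP: "card P = D - card T"
  proof -
    have inj: "inj_on (nth L) P" using inj_on_nth[OF dL] len unfolding P_def by simp
    have img: "nth L ` P = {..<D} - T"
    proof
      show "nth L ` P \<subseteq> {..<D} - T" unfolding P_def using LD by auto
      show "{..<D} - T \<subseteq> nth L ` P"
      proof
        fix z assume z: "z \<in> {..<D} - T"
        then have "pos L z \<in> P" "L ! pos L z = z" using posD unfolding P_def by auto
        then show "z \<in> nth L ` P" by (metis image_eqI)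
      qed
    qed
    have "card P = card ({..<D} - T)" using card_image[OF inj] img by simp
    also have "\<dots> = D - card T" using TL full
      by (metis card_Diff_subset card_lessThan finite_lessThan finite_subset)
    finally show ?thesis .
  qed
  show "(\<alpha>, P) \<in> codes D (D - card T)"
    unfolding codes_def using PD cardP inv out Pcl NCQ by simp
  define p where "p = (\<lambda>z. if z < D then pos L z else z)"
  have pperm: "p permutes {..<D}"
  proof (rule bij_imp_permutes)
    show "bij_betw p {..<D} {..<D}"
    proof (rule bij_betw_imageI)
      show "inj_on p {..<D}"
      proof (rule inj_onI)
        fix y z assume y: "y \<in> {..<D}" and z: "z \<in> {..<D}" and e: "p y = p z"
        then have "pos L y = pos L z" unfolding p_def by simp
        then show "y = z" using posD(2) y z by (metis lessThan_iff)
      qed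
      show "p ` {..<D} = {..<D}"
      proof
        show "p ` {..<D} \<subseteq> {..<D}" unfolding p_def using posD by auto
        show "{..<D} \<subseteq> p ` {..<D}"
        proof
          fix i assume i: "i \<in> {..<D}"
          then have "p (L ! i) = i" unfolding p_def using LD pn by simp
          then show "i \<in> p ` {..<D}" using LD i by (metis image_eqI lessThan_iff)
        qed
      qed
    qed
    show "p x = x" if "x \<notin> {..<D}" for x using that unfolding p_def by simp
  qed
  have ea: "p (a x) = \<alpha> (p x)" if x: "x < D" for x
  proof -
    have "p (a x) = pos L (a x)" unfolding p_def using a_in x by simp
    moreover have "\<alpha> (p x) = pos L (a (L ! pos L x))" unfolding p_def using x \<alpha>i posD by simp
    ultimately show ?thesis using posD(2)[OF x] by simp
  qed
  have ev: "p (s x) = (if p x \<in> P then Suc (p x) else Suc (\<alpha> (p x))) mod D" if x: "x < D" for x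
  proof -
    define i where "i = pos L x"
    have i: "i < D" "L ! i = x" using posD x i_def by auto
    have px: "p x = i" unfolding p_def i_def using x by simp
    have sD: "s x < D" using s_in x by simp
    show ?thesis
    proof (cases "x \<in> T")
      case False
      then have iP: "i \<in> P" unfolding P_def using i by simp
      have "s x = L ! (Suc i mod D)" using cyc i len False unfolding psi_def by auto
      then have "p (s x) = Suc i mod D" unfolding p_def using sD pn i by simp
      then show ?thesis using px iP by simp
    next
      case True
      then have iP: "i \<notin> P" unfolding P_def using i by simp
      define j where "j = pos L (a x)"
      have aD: "a x < D" using a_in x by simp
      have j: "j < D" "L ! j = a x" using posD aD j_def by auto
      have aiT: "a x \<in> T" using Ta True by simp
      have "psi T (a x) = s x" unfolding psi_def using aiT afp x by simp
      then have "s x = L ! (Suc j mod D)" using cyc j len by auto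
      then have "p (s x) = Suc j mod D" unfolding p_def using sD pn j by simp
      moreover have "\<alpha> i = j" using \<alpha>i i j_def by simp
      ultimately show ?thesis using px iP by simp
    qed
  qed
  have pxD: "p x < D" if "x < D" for x unfolding p_def using that posD by simp
  have c0: "fst (D, s, a) = fst (canon D \<alpha> P)" by (simp add: canon_def)
  have c1: "\<forall>x\<in>darts (D, s, a). p (einv (D, s, a) x) = einv (canon D \<alpha> P) (p x)"
    using ea by (simp add: darts_def einv_def canon_def)
  have c2: "\<forall>x\<in>darts (D, s, a). p (vrot (D, s, a) x) = vrot (canon D \<alpha> P) (p x)"
  proof
    fix x assume "x \<in> darts (D, s, a)"
    then have x: "x < D" by (simp add: darts_def)
    have "vrot (canon D \<alpha> P) (p x) = (if p x \<in> P then Suc (p x) else Suc (\<alpha> (p x))) mod D"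
      using pxD[OF x] by (simp add: vrot_def canon_def)
    then show "p (vrot (D, s, a) x) = vrot (canon D \<alpha> P) (p x)" using ev[OF x] by (simp add: vrot_def)
  qed
  have c3: "p permutes darts (D, s, a)" using pperm by (simp add: darts_def)
  show "map_iso (D, s, a) (canon D \<alpha> P)"
    unfolding map_iso_def using c0 c1 c2 c3 by blast
  have "orbit s ` {..<D} = orbit s ` W"
  proof
    show "orbit s ` W \<subseteq> orbit s ` {..<D}" using WL full by auto
    show "orbit s ` {..<D} \<subseteq> orbit s ` W"
    proof
      fix Ob assume "Ob \<in> orbit s ` {..<D}"
      then obtain x where x: "x \<in> set L" "Ob = orbit s x" using full by auto
      then obtain w where "w \<in> W" "x \<in> orbit s w" using LW by auto
      then show "Ob \<in> orbit s ` W" using orb_eq x by auto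
    qed
  qed
  then show "num_orbits {..<D} s = card W" using num_orbits_eq card_image[OF injW] by simp
qed

end

lemma even_invol:
  "finite S \<Longrightarrow> invol_on S f \<Longrightarrow> even (card S)"
proof (induction "card S" arbitrary: S rule: less_induct)
  case less
  show ?case
  proof (cases "S = {}")
    case True then show ?thesis by simp
  next
    case False
    then obtain x where x: "x \<in> S" by auto
    define y where "y = f x"
    have y: "y \<in> S" "y \<noteq> x" "f y = x" using less.prems(2) x unfolding invol_on_def y_def by auto
    define S' where "S' = S - {x, y}"
    have cS': "card S' = card S - 2"
    proof -
      have "card S' = card S - card {x, y}" unfolding S'_def using x y less.prems(1) by (intro card_Diff_subset) auto
      then show ?thesis using y by simp
    qed
    have c2: "card S \<ge> 2"
    proof -
      have "card {x, y} \<le> card S" using x y less.prems(1) by (intro card_mono) auto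
      then show ?thesis using y by simp
    qed
    have inv': "invol_on S' f"
      unfolding invol_on_def
    proof
      fix i assume i: "i \<in> S'"
      have fi: "f i \<in> S" "f i \<noteq> i" "f (f i) = i" using less.prems(2) i unfolding invol_on_def S'_def by auto
      have "f i \<noteq> x" using fi(3) i y(1) unfolding S'_def y_def by auto
      moreover have "f i \<noteq> y" using fi(3) i y(3) unfolding S'_def by auto
      ultimately show "f i \<in> S' \<and> f i \<noteq> i \<and> f (f i) = i" using fi unfolding S'_def by simp
    qed
    have "even (card S')" using less.hyps[of S'] cS' c2 less.prems(1) inv' unfolding S'_def by simp
    then show ?thesis using cS' c2 by (metis add_diff_inverse_nat even_add not_le even_numeral)
  qed
qed

lemma map_iso_refl: "map_iso M M"
proof -
  have "id permutes darts M" by (rule permutes_id)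
  then have "\<exists>p. p permutes darts M \<and> (\<forall>x\<in>darts M. p (einv M x) = einv M (p x)) \<and>
        ((\<forall>x\<in>darts M. p (vrot M x) = vrot M (p x)) \<or> (\<forall>x\<in>darts M. vrot M (p (vrot M x)) = p x))"
    by (intro exI[of _ id]) simp
  then show ?thesis unfolding map_iso_def by simp
qed

lemma map_iso_sym:
  assumes sp: "vrot M permutes darts M" and mi: "map_iso M K"
  shows "map_iso K M"
proof -
  have f: "fst M = fst K" using mi unfolding map_iso_def by simp
  have dK: "darts K = darts M" unfolding darts_def using f by simp
  obtain p where p: "p permutes darts M" and pa: "\<forall>x\<in>darts M. p (einv M x) = einv K (p x)"
    and pv: "(\<forall>x\<in>darts M. p (vrot M x) = vrot K (p x)) \<or> (\<forall>x\<in>darts M. vrot K (p (vrot M x)) = p x)"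
    using mi unfolding map_iso_def by blast
  define q where "q = inv p"
  have q: "q permutes darts M" unfolding q_def using permutes_inv[OF p] .
  have pq: "p (q y) = y" for y unfolding q_def using permutes_inverses(1)[OF p] .
  have qp: "q (p y) = y" for y unfolding q_def using permutes_inverses(2)[OF p] .
  have qin: "q y \<in> darts M" if "y \<in> darts M" for y using permutes_in_image[OF q] that by simp
  have qa: "\<forall>y\<in>darts K. q (einv K y) = einv M (q y)"
  proof
    fix y assume "y \<in> darts K"
    then have "q y \<in> darts M" using qin dK by simp
    then have "p (einv M (q y)) = einv K y" using pa pq by metis
    then show "q (einv K y) = einv M (q y)" using qp by metis
  qed
  have qv: "(\<forall>y\<in>darts K. q (vrot K y) = vrot M (q y)) \<or> (\<forall>y\<in>darts K. vrot M (q (vrot K y)) = q y)"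
    using pv
  proof
    assume h: "\<forall>x\<in>darts M. p (vrot M x) = vrot K (p x)"
    have "\<forall>y\<in>darts K. q (vrot K y) = vrot M (q y)"
    proof
      fix y assume "y \<in> darts K"
      then have "q y \<in> darts M" using qin dK by simp
      then have "p (vrot M (q y)) = vrot K y" using h pq by metis
      then show "q (vrot K y) = vrot M (q y)" using qp by metis
    qed
    then show ?thesis by blast
  next
    assume h: "\<forall>x\<in>darts M. vrot K (p (vrot M x)) = p x"
    have "\<forall>y\<in>darts K. vrot M (q (vrot K y)) = q y"
    proof
      fix y assume "y \<in> darts K"
      then have qy: "q y \<in> darts M" using qin dK by simp
      define z where "z = inv (vrot M) (q y)"
      have zD: "z \<in> darts M" unfolding z_def using permutes_in_image[OF permutes_inv[OF sp]] qy by simp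
      have sz: "vrot M z = q y" unfolding z_def using permutes_inverses(1)[OF sp] by simp
      have "vrot K (p (vrot M z)) = p z" using h zD by blast
      then have "vrot K y = p z" using sz pq by simp
      then have "q (vrot K y) = z" using qp by simp
      then show "vrot M (q (vrot K y)) = q y" using sz by simp
    qed
    then show ?thesis by blast
  qed
  show ?thesis unfolding map_iso_def using f q dK qa qv by auto
qed

lemma map_iso_trans:
  assumes sp: "vrot M permutes darts M" and m1: "map_iso M K" and m2: "map_iso K N"
  shows "map_iso M N"
proof -
  have f1: "fst M = fst K" using m1 unfolding map_iso_def by simp
  have f2: "fst K = fst N" using m2 unfolding map_iso_def by simp
  have dK: "darts K = darts M" unfolding darts_def using f1 by simp
  obtain p where p: "p permutes darts M" and pa: "\<forall>x\<in>darts M. p (einv M x) = einv K (p x)"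
    and pv: "(\<forall>x\<in>darts M. p (vrot M x) = vrot K (p x)) \<or> (\<forall>x\<in>darts M. vrot K (p (vrot M x)) = p x)"
    using m1 unfolding map_iso_def by blast
  obtain q where q: "q permutes darts K" and qa: "\<forall>x\<in>darts K. q (einv K x) = einv N (q x)"
    and qv: "(\<forall>x\<in>darts K. q (vrot K x) = vrot N (q x)) \<or> (\<forall>x\<in>darts K. vrot N (q (vrot K x)) = q x)"
    using m2 unfolding map_iso_def by blast
  have pin: "p x \<in> darts K" if "x \<in> darts M" for x using permutes_in_image[OF p] that dK by simp
  have sin: "vrot M x \<in> darts M" if "x \<in> darts M" for x using permutes_in_image[OF sp] that by simp
  have psin: "p (vrot M x) \<in> darts K" if "x \<in> darts M" for x using pin sin that by simp
  have r: "(q \<circ> p) permutes darts M" using permutes_compose[OF p] q dK by simp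
  have ra: "\<forall>x\<in>darts M. (q \<circ> p) (einv M x) = einv N ((q \<circ> p) x)"
    using pa qa pin by simp
  have rv: "(\<forall>x\<in>darts M. (q \<circ> p) (vrot M x) = vrot N ((q \<circ> p) x)) \<or>
            (\<forall>x\<in>darts M. vrot N ((q \<circ> p) (vrot M x)) = (q \<circ> p) x)"
  proof (cases "\<forall>x\<in>darts M. p (vrot M x) = vrot K (p x)")
    case h1: True
    show ?thesis
    proof (cases "\<forall>x\<in>darts K. q (vrot K x) = vrot N (q x)")
      case True then show ?thesis using h1 pin by simp
    next
      case False
      then have h2: "\<forall>x\<in>darts K. vrot N (q (vrot K x)) = q x" using qv by blast
      have "\<forall>x\<in>darts M. vrot N ((q \<circ> p) (vrot M x)) = (q \<circ> p) x" using h1 h2 pin by simp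
      then show ?thesis by blast
    qed
  next
    case False
    then have h1: "\<forall>x\<in>darts M. vrot K (p (vrot M x)) = p x" using pv by blast
    show ?thesis
    proof (cases "\<forall>x\<in>darts K. q (vrot K x) = vrot N (q x)")
      case h2: True
      have "\<forall>x\<in>darts M. vrot N ((q \<circ> p) (vrot M x)) = (q \<circ> p) x"
      proof
        fix x assume x: "x \<in> darts M"
        have "q (vrot K (p (vrot M x))) = vrot N (q (p (vrot M x)))" using h2 psin[OF x] by blast
        then show "vrot N ((q \<circ> p) (vrot M x)) = (q \<circ> p) x" using h1 x by simp
      qed
      then show ?thesis by blast
    next
      case False
      then have h2: "\<forall>x\<in>darts K. vrot N (q (vrot K x)) = q x" using qv by blast
      have "\<forall>x\<in>darts M. (q \<circ> p) (vrot M x) = vrot N ((q \<circ> p) x)"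
      proof
        fix x assume x: "x \<in> darts M"
        have "vrot N (q (vrot K (p (vrot M x)))) = q (p (vrot M x))" using h2 psin[OF x] by blast
        then show "(q \<circ> p) (vrot M x) = vrot N ((q \<circ> p) x)" using h1 x by simp
      qed
      then show ?thesis by blast
    qed
  qed
  show ?thesis unfolding map_iso_def using f1 f2 r ra rv by auto
qed

lemma count_classes:
  fixes U :: "rmap set" and X :: "'c set" and K :: "'c \<Rightarrow> rmap"
  assumes finX: "finite X" and perm: "\<forall>M\<in>U. vrot M permutes darts M"
    and enc: "\<forall>M\<in>U. \<exists>x\<in>X. map_iso M (K x)"
  shows "card (U // {(M, M'). M \<in> U \<and> M' \<in> U \<and> map_iso M M'}) \<le> card X"
proof -
  define R where "R = {(M, M'). M \<in> U \<and> M' \<in> U \<and> map_iso M M'}"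
  have eq: "equiv U R"
  proof (rule equivI)
    show "refl_on U R" unfolding refl_on_def R_def using map_iso_refl by auto
    show "sym R" unfolding sym_def R_def using map_iso_sym perm by blast
    show "trans R" unfolding trans_def R_def using map_iso_trans perm by blast
    show "R \<subseteq> U \<times> U" unfolding R_def by auto
  qed
  define code where "code = (\<lambda>C. SOME x. x \<in> X \<and> (\<exists>M\<in>C. map_iso M (K x)))"
  have codeP: "code C \<in> X \<and> (\<exists>M\<in>C. map_iso M (K (code C)))" if C: "C \<in> U // R" for C
  proof -
    obtain M0 where M0: "M0 \<in> U" "C = R `` {M0}" using C by (auto elim: quotientE)
    have "M0 \<in> C" using M0 map_iso_refl unfolding R_def by auto
    then have "\<exists>x. x \<in> X \<and> (\<exists>M\<in>C. map_iso M (K x))" using enc M0 by blast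
    then show ?thesis unfolding code_def by (rule someI_ex)
  qed
  have sub: "C \<subseteq> U" if "C \<in> U // R" for C
    using that unfolding R_def by (auto elim!: quotientE)
  have inj: "inj_on code (U // R)"
  proof (rule inj_onI)
    fix C1 C2 assume C1: "C1 \<in> U // R" and C2: "C2 \<in> U // R" and e: "code C1 = code C2"
    obtain M1 where M1: "M1 \<in> C1" "map_iso M1 (K (code C1))" using codeP[OF C1] by blast
    obtain M2 where M2: "M2 \<in> C2" "map_iso M2 (K (code C2))" using codeP[OF C2] by blast
    have U1: "M1 \<in> U" and U2: "M2 \<in> U" using M1 M2 sub C1 C2 by auto
    have "map_iso (K (code C1)) M2" using map_iso_sym[OF _ M2(2)] perm U2 e by simp
    then have "map_iso M1 M2" using map_iso_trans[OF _ M1(2)] perm U1 by simp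
    then have "(M1, M2) \<in> R" unfolding R_def using U1 U2 by simp
    then show "C1 = C2" using quotient_eqI[OF eq C1 C2 M1(1) M2(1)] by simp
  qed
  have "code ` (U // R) \<subseteq> X" using codeP by blast
  then have "card (U // R) \<le> card X" using card_inj_on_le[OF inj _ finX] by simp
  then show ?thesis unfolding R_def .
qed

lemma encode:
  assumes M: "M \<in> unicellular_maps n h"
  shows "\<exists>c\<in>codes (2 * (n + h - 1)) (2 * h). map_iso M (canon (2 * (n + h - 1)) (fst c) (snd c))"
proof -
  have rmap: "is_rmap M" and nv: "num_vertices M = n" and nf: "num_faces M = 1"
    and eg: "euler_genus M = int h" using M unfolding unicellular_maps_def by auto
  define D where "D = fst M"
  define s where "s = vrot M"
  define a where "a = einv M"
  have Meq: "M = (D, s, a)" unfolding D_def s_def a_def vrot_def einv_def by simp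
  have dM: "darts M = {..<D}" unfolding darts_def D_def by simp
  have euler: "int h = 2 - (int n - int (D div 2) + 1)"
    using eg nv nf unfolding euler_genus_def num_edges_def D_def by simp
  show ?thesis
  proof (cases "D = 0")
    case True
    have "n = 1" using nv True unfolding num_vertices_def D_def by simp
    then have h0: "h = 0" using euler True by simp
    have c: "(id, {}) \<in> codes 0 0" unfolding codes_def invol_on_def NC_def by simp
    have "map_iso M (canon 0 id {})"
    proof -
      have "fst M = fst (canon 0 id {})" using True unfolding D_def canon_def by simp
      moreover have "id permutes darts M" by (rule permutes_id)
      moreover have "darts M = {}" using dM True by simp
      ultimately show ?thesis unfolding map_iso_def by blast
    qed
    then show ?thesis using c \<open>n = 1\<close> h0 by force
  next
    case False
    then have D0: "0 < D" by simp
    interpret rm D s a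
      using rmap unfolding is_rmap_def dM s_def a_def by unfold_locales auto
    obtain L T W where g: "good L T W" and full: "set L = {..<D}"
      using good_reach[OF good_init[OF D0]] by blast
    define \<alpha> where "\<alpha> = (\<lambda>i. if i < D then pos L (a (L ! i)) else i)"
    define P where "P = {i. i < D \<and> L ! i \<notin> T}"
    have c: "(\<alpha>, P) \<in> codes D (D - card T)" and iso: "map_iso (D, s, a) (canon D \<alpha> P)"
      and no: "num_orbits {..<D} s = card W"
      using good_final[OF g full] unfolding \<alpha>_def P_def by auto
    have nW: "n = card W" using nv no False unfolding num_vertices_def D_def dM s_def by simp
    have cTW: "card T + 2 = 2 * card W" using g unfolding good_def by blast
    have inva: "invol_on {..<D} a" unfolding invol_on_def using afp a_in by auto
    have ev: "even D" using even_invol[OF _ inva] by simp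
    have e1: "D div 2 + 1 = n + h" using euler by linarith
    have DD: "D = 2 * (n + h - 1)" using e1 ev by (metis add_diff_cancel_right' dvd_mult_div_cancel)
    have ct: "D - card T = 2 * h" using DD cTW nW e1 by simp
    show ?thesis using c iso ct DD Meq by (intro bexI[of _ "(\<alpha>, P)"]) auto
  qed
qed

theorem lemma9:
  fixes n h :: nat
  assumes "n \<ge> 1" and "even h"
  shows "num_unicellular_maps n h \<le> 2 ^ (4 * n + 3 * h) * h ^ h"
proof -
  define D where "D = 2 * (n + h - 1)"
  define U where "U = unicellular_maps n h"
  have perm: "\<forall>M\<in>U. vrot M permutes darts M" unfolding U_def unicellular_maps_def is_rmap_def by auto
  have enc: "\<forall>M\<in>U. \<exists>c\<in>codes D (2 * h). map_iso M ((\<lambda>c. canon D (fst c) (snd c)) c)"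
    using encode unfolding U_def D_def by blast
  have cb: "finite (codes D (2 * h)) \<and> card (codes D (2 * h)) \<le> 2 ^ D * 2 ^ (D - 2 * h) * (2 * h) ^ (2 * h div 2)"
    by (rule codes_bound)
  have "num_unicellular_maps n h \<le> card (codes D (2 * h))"
    unfolding num_unicellular_maps_def U_def[symmetric]
    using count_classes[OF _ perm enc] cb by blast
  also have "\<dots> \<le> 2 ^ D * 2 ^ (D - 2 * h) * (2 * h) ^ (2 * h div 2)" using cb by blast
  also have "\<dots> = 2 ^ (D + (D - 2 * h) + h) * h ^ h"
    by (simp add: power_add power_mult_distrib)
  also have "\<dots> \<le> 2 ^ (4 * n + 3 * h) * h ^ h"
  proof (rule mult_right_mono)
    have "D + (D - 2 * h) + h \<le> 4 * n + 3 * h" unfolding D_def using assms(1) by simp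
    then show "(2::nat) ^ (D + (D - 2 * h) + h) \<le> 2 ^ (4 * n + 3 * h)" by (rule power_increasing) simp
  qed simp
  finally show ?thesis .
qed

end
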